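(* There exist constants $m_0\in\mathbb N$ and $C>0$ such that for all $n$, all $m>m_0$ and all $p\in(0,1)$ with $mp^3\le1$, $$\|\bar g_1\ast_1^0\bar g_1\|_2^2\le C\big(mp^5e^{-4mp^2}+(mp^3)^2e^{-4mp^2}\big),$$ $$\|\bar g_2\ast_1^1\bar g_2\|_2^2\le C\big(mp^4e^{-4mp^2}+(mp^3)^2e^{-4mp^2}\big),$$ $$\|\bar g_2\ast_1^1\bar g_1\|_2^2\le C\big(mp^5e^{-4mp^2}+(mp^3)^2e^{-4mp^2}\big).$$
   Context: $\mu_{m,p}$ is the measure on $\{0,1\}^m$ with $\mu_{m,p}(x)=p^{|x|}(1-p)^{m-|x|}$, $|x|=\sum_ix_i$; norms are $L^2$ norms with respect to products of $\mu_{m,p}$. $g:\{0,1\}^m\times\{0,1\}^m\to\{0,1\}$, $g(x,y)=1$ if $x_i=y_i=1$ for some $i$ and $0$ otherwise; $g_1(x)=\int g(x,y)\,d\mu_{m,p}(y)$; $\hat p=1-(1-p^2)^m$; $\bar g_2=g-\hat p$, $\bar g_1=g_1-\hat p$. Contraction: for $f$ on $(\{0,1\}^m)^k$, $h$ on $(\{0,1\}^m)^l$, $0\le a\le b\le k\wedge l$: $f\ast_b^ah(x_1,\ldots,x_{b-a},y_1,\ldots,y_{k-b},z_1,\ldots,z_{l-b})=\int_{(\{0,1\}^m)^a}f(w,x,y)h(w,x,z)\,d\mu_{m,p}^{\otimes a}(w)$. *)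

theory Defs
  imports Complex_Main
begin

text \<open>A point x of {0,1}^m is represented by its support {i. x_i = 1}, a subset of {..<m}.\<close>

definition cube :: "nat \<Rightarrow> nat set set" where
  "cube m = Pow {..<m}"

definition mu :: "nat \<Rightarrow> real \<Rightarrow> nat set \<Rightarrow> real" where
  "mu m p x = p ^ card x * (1 - p) ^ (m - card x)"

definition tuples :: "nat \<Rightarrow> nat \<Rightarrow> nat set list set" where
  "tuples m j = {v. length v = j \<and> set v \<subseteq> cube m}"

definition integ :: "nat \<Rightarrow> real \<Rightarrow> nat \<Rightarrow> (nat set list \<Rightarrow> real) \<Rightarrow> real" where
  "integ m p j F = (\<Sum>v\<in>tuples m j. (\<Prod>i<j. mu m p (v ! i)) * F v)"

definition normsq :: "nat \<Rightarrow> real \<Rightarrow> nat \<Rightarrow> (nat set list \<Rightarrow> real) \<Rightarrow> real" where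
  "normsq m p j F = integ m p j (\<lambda>v. (F v)\<^sup>2)"

text \<open>Contraction f *_b^a h for f on ({0,1}^m)^k, h on ({0,1}^m)^l; the result is a function
  of (x_1..x_{b-a}, y_1..y_{k-b}, z_1..z_{l-b}), given as one list.\<close>
definition contr :: "nat \<Rightarrow> real \<Rightarrow> nat \<Rightarrow> nat \<Rightarrow> nat \<Rightarrow> nat \<Rightarrow>
    (nat set list \<Rightarrow> real) \<Rightarrow> (nat set list \<Rightarrow> real) \<Rightarrow> nat set list \<Rightarrow> real" where
  "contr m p k l a b f h v =
     (let xs = take (b - a) v; ys = take (k - b) (drop (b - a) v); zs = drop (b - a + (k - b)) v
      in integ m p a (\<lambda>w. f (w @ xs @ ys) * h (w @ xs @ zs)))"

definition g :: "nat set \<Rightarrow> nat set \<Rightarrow> real" where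
  "g x y = (if x \<inter> y \<noteq> {} then 1 else 0)"

definition g1 :: "nat \<Rightarrow> real \<Rightarrow> nat set \<Rightarrow> real" where
  "g1 m p x = integ m p 1 (\<lambda>v. g x (v ! 0))"

definition phat :: "nat \<Rightarrow> real \<Rightarrow> real" where
  "phat m p = 1 - (1 - p\<^sup>2) ^ m"

definition gbar2 :: "nat \<Rightarrow> real \<Rightarrow> nat set list \<Rightarrow> real" where
  "gbar2 m p v = g (v ! 0) (v ! 1) - phat m p"

definition gbar1 :: "nat \<Rightarrow> real \<Rightarrow> nat set list \<Rightarrow> real" where
  "gbar1 m p v = g1 m p (v ! 0) - phat m p"

end

theory Submission
  imports Defs
begin


lemma FL: fixes f :: "nat \<Rightarrow> bool \<Rightarrow> real" shows "(\<Sum>x\<in>Pow {..<m::nat}. \<Prod>i<m. f i (i \<in> x)) = (\<Prod>i<m. f i True + f i False)"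
proof (induction m)
  case 0 then show ?case by simp
next
  case (Suc m)
  have disj: "Pow {..<m} \<inter> insert m ` Pow {..<m} = {}" by auto
  have inj: "inj_on (insert m) (Pow {..<m})"
    by (rule inj_onI) (auto simp: insert_ident)
  have A: "(\<Sum>x\<in>Pow {..<m}. \<Prod>i<Suc m. f i (i \<in> x)) = f m False * (\<Sum>x\<in>Pow {..<m}. \<Prod>i<m. f i (i \<in> x))"
  proof -
    have "\<And>x. x \<in> Pow {..<m} \<Longrightarrow> (\<Prod>i<Suc m. f i (i \<in> x)) = f m False * (\<Prod>i<m. f i (i \<in> x))"
    proof -
      fix x assume "x \<in> Pow {..<m}"
      then have "m \<notin> x" by auto
      then show "(\<Prod>i<Suc m. f i (i \<in> x)) = f m False * (\<Prod>i<m. f i (i \<in> x))"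
        by (simp add: lessThan_Suc)
    qed
    then have "(\<Sum>x\<in>Pow {..<m}. \<Prod>i<Suc m. f i (i \<in> x)) = (\<Sum>x\<in>Pow {..<m}. f m False * (\<Prod>i<m. f i (i \<in> x)))"
      by (rule sum.cong[OF refl])
    also have "\<dots> = f m False * (\<Sum>x\<in>Pow {..<m}. \<Prod>i<m. f i (i \<in> x))"
      by (rule sum_distrib_left[symmetric])
    finally show ?thesis .
  qed
  have B0: "\<And>x. x \<in> Pow {..<m} \<Longrightarrow> (\<Prod>i<m. f i (i \<in> insert m x)) = (\<Prod>i<m. f i (i \<in> x))"
    by (rule prod.cong) auto
  have B: "(\<Sum>x\<in>insert m ` Pow {..<m}. \<Prod>i<Suc m. f i (i \<in> x)) = f m True * (\<Sum>x\<in>Pow {..<m}. \<Prod>i<m. f i (i \<in> x))"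
    by (simp add: sum.reindex[OF inj] sum_distrib_left B0 mult.commute cong: sum.cong)
  have P: "Pow {..<Suc m} = Pow {..<m} \<union> insert m ` Pow {..<m}"
    by (simp add: lessThan_Suc Pow_insert)
  have "(\<Sum>x\<in>Pow {..<Suc m}. \<Prod>i<Suc m. f i (i \<in> x)) = 
     (\<Sum>x\<in>Pow {..<m}. \<Prod>i<Suc m. f i (i \<in> x)) + (\<Sum>x\<in>insert m ` Pow {..<m}. \<Prod>i<Suc m. f i (i \<in> x))"
    unfolding P by (rule sum.union_disjoint) (use disj in auto)
  also have "\<dots> = (f m False + f m True) * (\<Prod>i<m. f i True + f i False)"
    unfolding A B Suc.IH by (simp add: algebra_simps)
  finally show ?case by (simp add: lessThan_Suc algebra_simps)
qed

lemma PI: "x \<subseteq> {..<m} \<Longrightarrow> (\<Prod>i<m. if i \<in> x then A else B) = A ^ card x * (B::real) ^ (m - card x)"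
proof -
  assume x: "x \<subseteq> {..<m}"
  have 1: "{..<m} \<inter> x = x" using x by auto
  have 2: "{..<m} \<inter> - x = {..<m} - x" by auto
  have 3: "card ({..<m} - x) = m - card x" using x by (simp add: card_Diff_subset finite_subset)
  show ?thesis by (simp add: prod.If_cases 1 2 3)
qed

lemma mu_prod: "x \<subseteq> {..<m} \<Longrightarrow> mu m p x = (\<Prod>i<m. if i \<in> x then p else 1 - p)"
  by (simp add: PI mu_def)

lemma BIN: "(\<Sum>x\<in>Pow {..<m}. A ^ card x * B ^ (m - card x)) = (A + B::real) ^ m"
proof -
  have "(\<Sum>x\<in>Pow {..<m}. A ^ card x * B ^ (m - card x)) = (\<Sum>x\<in>Pow {..<m}. \<Prod>i<m. if i \<in> x then A else B)"
    by (rule sum.cong) (auto simp: PI)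
  also have "\<dots> = (\<Prod>i<m. A + B)" using FL[where m=m and f="\<lambda>i b. if b then A else B"] by simp
  finally show ?thesis by simp
qed

lemma FL2: fixes f :: "nat \<Rightarrow> bool \<Rightarrow> bool \<Rightarrow> real" shows "(\<Sum>x\<in>Pow {..<m::nat}. \<Sum>y\<in>Pow {..<m}. \<Prod>i<m. f i (i \<in> x) (i \<in> y))
   = (\<Prod>i<m. f i True True + f i True False + f i False True + f i False False)"
proof -
  have "(\<Sum>x\<in>Pow {..<m}. \<Sum>y\<in>Pow {..<m}. \<Prod>i<m. f i (i \<in> x) (i \<in> y))
     = (\<Sum>x\<in>Pow {..<m}. \<Prod>i<m. f i (i \<in> x) True + f i (i \<in> x) False)"
  proof (rule sum.cong)
    fix x show "(\<Sum>y\<in>Pow {..<m}. \<Prod>i<m. f i (i \<in> x) (i \<in> y)) = (\<Prod>i<m. f i (i \<in> x) True + f i (i \<in> x) False)"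
      using FL[where m=m and f="\<lambda>i b. f i (i \<in> x) b"] by simp
  qed simp
  also have "\<dots> = (\<Prod>i<m. f i True True + f i True False + (f i False True + f i False False))"
    by (rule FL[where m=m and f="\<lambda>i b. f i b True + f i b False"])
  finally show ?thesis by (simp add: add.assoc)
qed

lemma tuples0: "tuples m 0 = {[]}" by (auto simp: tuples_def)
lemma tuples1: "tuples m 1 = (\<lambda>x. [x]) ` cube m"
  by (auto simp: tuples_def length_Suc_conv)
lemma tuples2: "tuples m 2 = (\<lambda>(x,y). [x,y]) ` (cube m \<times> cube m)"
  by (auto simp: tuples_def length_Suc_conv numeral_2_eq_2)

lemma integ0: "integ m p 0 F = F []"
  by (simp add: integ_def tuples0)

lemma integ1: "integ m p 1 F = (\<Sum>x\<in>cube m. mu m p x * F [x])"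
  unfolding integ_def tuples1
  by (subst sum.reindex) (auto simp: inj_on_def)

lemma integ2: "integ m p 2 F = (\<Sum>x\<in>cube m. \<Sum>y\<in>cube m. mu m p x * mu m p y * F [x,y])"
proof -
  have "integ m p 2 F = (\<Sum>(x,y)\<in>cube m \<times> cube m. mu m p x * mu m p y * F [x,y])"
    unfolding integ_def tuples2
    by (subst sum.reindex) (auto simp: inj_on_def numeral_2_eq_2 lessThan_Suc intro!: sum.cong)
  also have "\<dots> = (\<Sum>x\<in>cube m. \<Sum>y\<in>cube m. mu m p x * mu m p y * F [x,y])"
    by (simp add: sum.cartesian_product)
  finally show ?thesis .
qed



lemma accum:
  fixes X :: "nat \<Rightarrow> real"
  assumes t: "\<tau> \<ge> 1" and c: "c \<ge> 0" and X0: "X 0 = 0"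
    and step: "\<And>k. k < n \<Longrightarrow> \<bar>X (Suc k)\<bar> \<le> \<tau> * \<bar>X k\<bar> + c * \<tau> ^ k"
  shows "\<bar>X n\<bar> \<le> real n * c * \<tau> ^ n"
  using step
proof (induction n)
  case 0 then show ?case by (simp add: X0)
next
  case (Suc n)
  have IH: "\<bar>X n\<bar> \<le> real n * c * \<tau> ^ n" using Suc by auto
  have "\<bar>X (Suc n)\<bar> \<le> \<tau> * \<bar>X n\<bar> + c * \<tau> ^ n" using Suc.prems by auto
  also have "\<dots> \<le> \<tau> * (real n * c * \<tau> ^ n) + c * \<tau> ^ n"
    using IH t c by (intro add_mono mult_left_mono) auto
  also have "\<dots> \<le> real (Suc n) * c * \<tau> ^ Suc n"
  proof -
    have "\<tau> ^ n \<le> \<tau> ^ Suc n" using t by (simp add: power_increasing)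
    then have "c * \<tau> ^ n \<le> c * \<tau> ^ Suc n" using c by (rule mult_left_mono)
    then show ?thesis by (simp add: algebra_simps)
  qed
  finally show ?case .
qed

lemma le_mul_pow: "0 \<le> (a::real) \<Longrightarrow> 1 \<le> \<tau> \<Longrightarrow> a \<le> a * \<tau> ^ k"
  using mult_left_mono[of 1 "\<tau> ^ k" a] one_le_power[of \<tau> k] by simp

lemma tri4: "\<bar>a * x + b * y + c * z + (d::real)\<bar> \<le> \<bar>a\<bar> * \<bar>x\<bar> + \<bar>b\<bar> * \<bar>y\<bar> + \<bar>c\<bar> * \<bar>z\<bar> + \<bar>d\<bar>"
proof -
  have "\<bar>a * x + b * y + c * z + d\<bar> \<le> \<bar>a * x\<bar> + \<bar>b * y\<bar> + \<bar>c * z\<bar> + \<bar>d\<bar>" by arith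
  then show ?thesis by (simp add: abs_mult)
qed

lemma tri3: "\<bar>a * x + b * y + (d::real)\<bar> \<le> \<bar>a\<bar> * \<bar>x\<bar> + \<bar>b\<bar> * \<bar>y\<bar> + \<bar>d\<bar>"
proof -
  have "\<bar>a * x + b * y + d\<bar> \<le> \<bar>a * x\<bar> + \<bar>b * y\<bar> + \<bar>d\<bar>" by arith
  then show ?thesis by (simp add: abs_mult)
qed

definition M2 :: "real \<Rightarrow> nat \<Rightarrow> real" where "M2 t2 n = t2 ^ n - 1"
definition M3 :: "real \<Rightarrow> real \<Rightarrow> nat \<Rightarrow> real" where "M3 t2 t3 n = t3 ^ n - 3 * t2 ^ n + 2"
definition M4 :: "real \<Rightarrow> real \<Rightarrow> real \<Rightarrow> nat \<Rightarrow> real" where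
  "M4 t2 t3 t4 n = t4 ^ n - 4 * t3 ^ n + 6 * t2 ^ n - 3"

lemma M2_rec: "M2 t2 (Suc k) = t2 * M2 t2 k + (t2 - 1)"
  by (simp add: M2_def algebra_simps)
lemma M3_rec: "M3 t2 t3 (Suc k) = t3 * M3 t2 t3 k + 3 * (t3 - t2) * M2 t2 k + (t3 - 3 * t2 + 2)"
  by (simp add: M2_def M3_def algebra_simps)
lemma M4_rec: "M4 t2 t3 t4 (Suc k) = t4 * M4 t2 t3 t4 k + 4 * (t4 - t3) * M3 t2 t3 k
    + 6 * (t4 - 2 * t3 + t2) * M2 t2 k + (t4 - 4 * t3 + 6 * t2 - 3)"
  by (simp add: M2_def M3_def M4_def algebra_simps)

lemma M2_bound:
  assumes t: "\<tau> \<ge> 1" "\<bar>t2\<bar> \<le> \<tau>"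
  shows "\<bar>M2 t2 n\<bar> \<le> real n * \<bar>t2 - 1\<bar> * \<tau> ^ n"
proof (rule accum[OF t(1)])
  fix k
  have "\<bar>M2 t2 (Suc k)\<bar> \<le> \<bar>t2\<bar> * \<bar>M2 t2 k\<bar> + \<bar>t2 - 1\<bar>"
    unfolding M2_rec by (metis abs_mult abs_triangle_ineq)
  also have "\<dots> \<le> \<tau> * \<bar>M2 t2 k\<bar> + \<bar>t2 - 1\<bar> * \<tau> ^ k"
    using t by (intro add_mono mult_right_mono le_mul_pow) auto
  finally show "\<bar>M2 t2 (Suc k)\<bar> \<le> \<tau> * \<bar>M2 t2 k\<bar> + \<bar>t2 - 1\<bar> * \<tau> ^ k" .
qed (auto simp: M2_def)

lemma M3_bound:
  assumes t: "\<tau> \<ge> 1" "\<bar>t2\<bar> \<le> \<tau>" "\<bar>t3\<bar> \<le> \<tau>" and kN: "n \<le> N"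
  shows "\<bar>M3 t2 t3 n\<bar> \<le> real n * (3 * \<bar>t3 - t2\<bar> * (real N * \<bar>t2 - 1\<bar>) + \<bar>t3 - 3 * t2 + 2\<bar>) * \<tau> ^ n"
proof (rule accum[OF t(1)])
  fix k assume k: "k < n"
  have m2: "\<bar>M2 t2 k\<bar> \<le> (real N * \<bar>t2 - 1\<bar>) * \<tau> ^ k"
  proof -
    have "\<bar>M2 t2 k\<bar> \<le> real k * \<bar>t2 - 1\<bar> * \<tau> ^ k" by (rule M2_bound[OF t(1,2)])
    also have "\<dots> \<le> real N * \<bar>t2 - 1\<bar> * \<tau> ^ k"
      using k kN t by (intro mult_right_mono) auto
    finally show ?thesis by simp
  qed
  have "\<bar>M3 t2 t3 (Suc k)\<bar> \<le> \<bar>t3\<bar> * \<bar>M3 t2 t3 k\<bar> + 3 * \<bar>t3 - t2\<bar> * \<bar>M2 t2 k\<bar> + \<bar>t3 - 3 * t2 + 2\<bar>"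
    unfolding M3_rec using tri3[of t3 "M3 t2 t3 k" "3 * (t3 - t2)" "M2 t2 k" "t3 - 3 * t2 + 2"]
    unfolding abs_mult[of 3] by simp
  also have "\<dots> \<le> \<tau> * \<bar>M3 t2 t3 k\<bar> + 3 * \<bar>t3 - t2\<bar> * ((real N * \<bar>t2 - 1\<bar>) * \<tau> ^ k) + \<bar>t3 - 3 * t2 + 2\<bar> * \<tau> ^ k"
    using t m2 by (intro add_mono mult_right_mono mult_left_mono le_mul_pow) auto
  finally show "\<bar>M3 t2 t3 (Suc k)\<bar> \<le> \<tau> * \<bar>M3 t2 t3 k\<bar> + (3 * \<bar>t3 - t2\<bar> * (real N * \<bar>t2 - 1\<bar>) + \<bar>t3 - 3 * t2 + 2\<bar>) * \<tau> ^ k"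
    by (simp add: algebra_simps)
qed (auto simp: M3_def)

lemma M4_bound:
  assumes t: "\<tau> \<ge> 1" "\<bar>t2\<bar> \<le> \<tau>" "\<bar>t3\<bar> \<le> \<tau>" "\<bar>t4\<bar> \<le> \<tau>"
  shows "\<bar>M4 t2 t3 t4 N\<bar> \<le> real N * (4 * \<bar>t4 - t3\<bar> * (real N * (3 * \<bar>t3 - t2\<bar> * (real N * \<bar>t2 - 1\<bar>) + \<bar>t3 - 3 * t2 + 2\<bar>))
      + 6 * \<bar>t4 - 2 * t3 + t2\<bar> * (real N * \<bar>t2 - 1\<bar>) + \<bar>t4 - 4 * t3 + 6 * t2 - 3\<bar>) * \<tau> ^ N"
proof (rule accum[OF t(1)])
  fix k assume k: "k < N"
  define c3 where "c3 = 3 * \<bar>t3 - t2\<bar> * (real N * \<bar>t2 - 1\<bar>) + \<bar>t3 - 3 * t2 + 2\<bar>"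
  have c3: "c3 \<ge> 0" unfolding c3_def by auto
  have m2: "\<bar>M2 t2 k\<bar> \<le> (real N * \<bar>t2 - 1\<bar>) * \<tau> ^ k"
  proof -
    have "\<bar>M2 t2 k\<bar> \<le> real k * \<bar>t2 - 1\<bar> * \<tau> ^ k" by (rule M2_bound[OF t(1,2)])
    also have "\<dots> \<le> real N * \<bar>t2 - 1\<bar> * \<tau> ^ k"
      using k t by (intro mult_right_mono) auto
    finally show ?thesis by simp
  qed
  have m3: "\<bar>M3 t2 t3 k\<bar> \<le> (real N * c3) * \<tau> ^ k"
  proof -
    have "\<bar>M3 t2 t3 k\<bar> \<le> real k * c3 * \<tau> ^ k" unfolding c3_def
      by (rule M3_bound[OF t(1,2,3)]) (use k in auto)
    also have "\<dots> \<le> real N * c3 * \<tau> ^ k"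
      using k t c3 by (intro mult_right_mono) auto
    finally show ?thesis by simp
  qed
  have "\<bar>M4 t2 t3 t4 (Suc k)\<bar> \<le> \<bar>t4\<bar> * \<bar>M4 t2 t3 t4 k\<bar> + 4 * \<bar>t4 - t3\<bar> * \<bar>M3 t2 t3 k\<bar>
      + 6 * \<bar>t4 - 2 * t3 + t2\<bar> * \<bar>M2 t2 k\<bar> + \<bar>t4 - 4 * t3 + 6 * t2 - 3\<bar>"
    unfolding M4_rec using tri4[of t4 "M4 t2 t3 t4 k" "4 * (t4 - t3)" "M3 t2 t3 k" "6 * (t4 - 2 * t3 + t2)" "M2 t2 k" "t4 - 4 * t3 + 6 * t2 - 3"]
    unfolding abs_mult[of 4] abs_mult[of 6] by simp
  also have "\<dots> \<le> \<tau> * \<bar>M4 t2 t3 t4 k\<bar> + 4 * \<bar>t4 - t3\<bar> * ((real N * c3) * \<tau> ^ k)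
      + 6 * \<bar>t4 - 2 * t3 + t2\<bar> * ((real N * \<bar>t2 - 1\<bar>) * \<tau> ^ k) + \<bar>t4 - 4 * t3 + 6 * t2 - 3\<bar> * \<tau> ^ k"
    using t m2 m3 by (intro add_mono mult_right_mono mult_left_mono le_mul_pow) auto
  finally show "\<bar>M4 t2 t3 t4 (Suc k)\<bar> \<le> \<tau> * \<bar>M4 t2 t3 t4 k\<bar> + (4 * \<bar>t4 - t3\<bar> * (real N * (3 * \<bar>t3 - t2\<bar> * (real N * \<bar>t2 - 1\<bar>) + \<bar>t3 - 3 * t2 + 2\<bar>))
      + 6 * \<bar>t4 - 2 * t3 + t2\<bar> * (real N * \<bar>t2 - 1\<bar>) + \<bar>t4 - 4 * t3 + 6 * t2 - 3\<bar>) * \<tau> ^ k"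
    by (simp add: algebra_simps c3_def)
qed (auto simp: M4_def)



lemma pdu: assumes "0 \<le> y" "y \<le> (x::real)"
  shows "x ^ Suc n - y ^ Suc n \<le> real (Suc n) * (x - y) * x ^ n"
proof -
  have "(\<Sum>p<Suc n. x ^ p * y ^ (n - p)) \<le> (\<Sum>p<Suc n. x ^ n)"
  proof (rule sum_mono)
    fix p assume "p \<in> {..<Suc n}"
    then have "x ^ p * y ^ (n - p) \<le> x ^ p * x ^ (n - p)"
      using assms by (intro mult_left_mono power_mono) auto
    also have "\<dots> = x ^ n" using \<open>p \<in> {..<Suc n}\<close> by (simp flip: power_add)
    finally show "x ^ p * y ^ (n - p) \<le> x ^ n" .
  qed
  then have "(x - y) * (\<Sum>p<Suc n. x ^ p * y ^ (n - p)) \<le> (x - y) * (\<Sum>p<Suc n. x ^ n)"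
    using assms by (intro mult_left_mono) auto
  moreover have "(\<Sum>p<Suc n. x ^ n) = real (Suc n) * x ^ n" by simp
  ultimately show ?thesis unfolding diff_power_eq_sum by (simp add: algebra_simps)
qed

lemma pdl: assumes "0 \<le> y" "y \<le> (x::real)"
  shows "real (Suc n) * (x - y) * y ^ n \<le> x ^ Suc n - y ^ Suc n"
proof -
  have "(\<Sum>p<Suc n. y ^ n) \<le> (\<Sum>p<Suc n. x ^ p * y ^ (n - p))"
  proof (rule sum_mono)
    fix p assume "p \<in> {..<Suc n}"
    then have "y ^ n = y ^ p * y ^ (n - p)" by (simp flip: power_add)
    also have "\<dots> \<le> x ^ p * y ^ (n - p)"
      using assms by (intro mult_right_mono power_mono) auto
    finally show "y ^ n \<le> x ^ p * y ^ (n - p)" .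
  qed
  then have "(x - y) * (\<Sum>p<Suc n. y ^ n) \<le> (x - y) * (\<Sum>p<Suc n. x ^ p * y ^ (n - p))"
    using assms by (intro mult_left_mono) auto
  moreover have "(\<Sum>p<Suc n. y ^ n) = real (Suc n) * y ^ n" by simp
  ultimately show ?thesis unfolding diff_power_eq_sum by (simp add: algebra_simps)
qed

lemma pow_half: assumes "1/2 \<le> (x::real)" "k \<le> m" shows "x ^ (m - k) \<le> 2 ^ k * x ^ m"
proof -
  have "x ^ m = x ^ (m - k) * x ^ k" using assms by (simp flip: power_add)
  moreover have "(1/2) ^ k \<le> x ^ k" using assms by (intro power_mono) auto
  moreover have "x ^ (m - k) \<ge> 0" using assms by simp
  ultimately have "x ^ (m - k) * (1/2) ^ k \<le> x ^ m" by (metis mult_left_mono)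
  then show ?thesis by (simp add: field_simps)
qed

lemma Phi_bound:
  fixes A1 A2 A3 \<delta> \<kappa> :: real
  assumes a3: "1/2 \<le> A3" and a32: "A3 \<le> A2" and a21: "A2 \<le> A1" and d: "A1 - A2 = \<delta>"
    and k: "A2 - A3 = \<kappa> * \<delta>" "0 \<le> \<kappa>" "\<kappa> \<le> 1" and m: "2 \<le> m"
  shows "A1 ^ m - 2 * A2 ^ m + A3 ^ m \<le> A1 ^ m * (8 * real m ^ 2 * \<delta> ^ 2 + 2 * real m * \<delta> * (1 - \<kappa>))"
proof -
  obtain n where n: "m = Suc (Suc n)" using m by (metis add_2_eq_Suc le_Suc_ex)
  have dpos: "0 \<le> \<delta>" using d a21 by simp
  have a1: "1/2 \<le> A1" using a3 a32 a21 by simp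
  have h1: "A1 ^ m - A2 ^ m \<le> real m * \<delta> * A1 ^ Suc n"
    using pdu[of A2 A1 "Suc n"] a3 a32 a21 d n by simp
  have h2: "real m * (\<kappa> * \<delta>) * A3 ^ Suc n \<le> A2 ^ m - A3 ^ m"
    using pdl[of A3 A2 "Suc n"] a3 a32 a21 k n by simp
  have h3: "A1 ^ Suc n - A3 ^ Suc n \<le> real (Suc n) * ((1 + \<kappa>) * \<delta>) * A1 ^ n"
    using pdu[of A3 A1 n] a3 a32 a21 d k by (simp add: algebra_simps)
  have p1: "A1 ^ n \<le> 4 * A1 ^ m" using pow_half[OF a1, of 2 m] n by simp
  have p2: "A1 ^ Suc n \<le> 2 * A1 ^ m" using pow_half[OF a1, of 1 m] n by simp
  have p3: "A3 ^ Suc n \<le> A1 ^ Suc n" using a3 a32 a21 by (intro power_mono) auto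
  have "A1 ^ m - 2 * A2 ^ m + A3 ^ m \<le> real m * \<delta> * A1 ^ Suc n - real m * (\<kappa> * \<delta>) * A3 ^ Suc n"
    using h1 h2 by simp
  also have "\<dots> = real m * \<delta> * ((A1 ^ Suc n - A3 ^ Suc n) + (1 - \<kappa>) * A3 ^ Suc n)"
    by (simp add: algebra_simps)
  also have "\<dots> \<le> real m * \<delta> * (real (Suc n) * ((1 + \<kappa>) * \<delta>) * A1 ^ n + (1 - \<kappa>) * A1 ^ Suc n)"
    using h3 p3 k dpos by (intro mult_left_mono add_mono) auto
  also have "\<dots> \<le> real m * \<delta> * (real m * (2 * \<delta>) * (4 * A1 ^ m) + (1 - \<kappa>) * (2 * A1 ^ m))"
  proof -
    have "real (Suc n) * ((1 + \<kappa>) * \<delta>) \<le> real m * (2 * \<delta>)"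
      using n k dpos by (intro mult_mono) auto
    then have "real (Suc n) * ((1 + \<kappa>) * \<delta>) * A1 ^ n \<le> real m * (2 * \<delta>) * (4 * A1 ^ m)"
      using p1 a1 dpos n k by (intro mult_mono) auto
    moreover have "(1 - \<kappa>) * A1 ^ Suc n \<le> (1 - \<kappa>) * (2 * A1 ^ m)"
      using p2 k by (intro mult_left_mono) auto
    ultimately have "real (Suc n) * ((1 + \<kappa>) * \<delta>) * A1 ^ n + (1 - \<kappa>) * A1 ^ Suc n
       \<le> real m * (2 * \<delta>) * (4 * A1 ^ m) + (1 - \<kappa>) * (2 * A1 ^ m)" by (rule add_mono)
    moreover have "0 \<le> real m * \<delta>" using dpos by simp
    ultimately show ?thesis by (rule mult_left_mono)
  qed
  also have "\<dots> = A1 ^ m * (8 * real m ^ 2 * \<delta> ^ 2 + 2 * real m * \<delta> * (1 - \<kappa>))"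
    by (simp add: algebra_simps power2_eq_square)
  finally show ?thesis .
qed

lemma pow_exp: assumes "0 \<le> (A::real)" "A \<le> 1 + s" shows "A ^ m \<le> exp (real m * s)"
proof -
  have "A \<le> exp s" using assms(2) exp_ge_add_one_self[of s] by linarith
  then have "A ^ m \<le> exp s ^ m" using assms(1) by (intro power_mono) auto
  then show ?thesis by (simp add: exp_of_nat_mult)
qed



lemma sum_mu_pow: "(\<Sum>x\<in>Pow {..<m}. mu m p x * c ^ card x) = (p * c + (1 - p)) ^ m"
proof -
  have "(\<Sum>x\<in>Pow {..<m}. mu m p x * c ^ card x) = (\<Sum>x\<in>Pow {..<m}. (p * c) ^ card x * (1 - p) ^ (m - card x))"
    by (rule sum.cong) (auto simp: mu_def power_mult_distrib)
  then show ?thesis by (simp add: BIN)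
qed

lemma sum_mu_1: "(\<Sum>x\<in>Pow {..<m}. mu m p x) = 1"
  using sum_mu_pow[of m p 1] by simp

lemma disj_term:
  assumes x: "x \<subseteq> {..<m}"
  shows "mu m p x * (if x \<inter> y = {} then 1 else 0) * c ^ card x
      = (\<Prod>i<m. if i \<in> x then (if i \<in> y then 0 else p * c) else 1 - p)"
proof (cases "x \<inter> y = {}")
  case True
  have "(\<Prod>i<m. if i \<in> x then (if i \<in> y then 0 else p * c) else 1 - p) = (\<Prod>i<m. if i \<in> x then p * c else 1 - p)"
    by (rule prod.cong) (use True in auto)
  also have "\<dots> = (p * c) ^ card x * (1 - p) ^ (m - card x)" by (rule PI[OF x])
  finally show ?thesis using True x by (simp add: mu_def power_mult_distrib)
next
  case False
  then obtain i where i: "i \<in> x" "i \<in> y" by auto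
  then have "i < m" using x by auto
  then have "(\<Prod>i<m. if i \<in> x then (if i \<in> y then 0 else p * c) else 1 - p) = 0"
    using i by (intro prod_zero) auto
  then show ?thesis using False by simp
qed

lemma sum_disj:
  assumes y: "y \<subseteq> {..<m}"
  shows "(\<Sum>x\<in>Pow {..<m}. mu m p x * (if x \<inter> y = {} then 1 else 0) * c ^ card x)
     = (1 - p) ^ card y * (p * c + (1 - p)) ^ (m - card y)"
proof -
  have "(\<Sum>x\<in>Pow {..<m}. mu m p x * (if x \<inter> y = {} then 1 else 0) * c ^ card x)
     = (\<Sum>x\<in>Pow {..<m}. \<Prod>i<m. if i \<in> x then (if i \<in> y then 0 else p * c) else 1 - p)"
    by (rule sum.cong) (auto simp: disj_term)
  also have "\<dots> = (\<Prod>i<m. (if i \<in> y then 0 else p * c) + (1 - p))"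
    using FL[where m=m and f="\<lambda>i b. if b then (if i \<in> y then 0 else p * c) else 1 - p"] by simp
  also have "\<dots> = (\<Prod>i<m. if i \<in> y then 1 - p else p * c + (1 - p))"
    by (rule prod.cong) auto
  also have "\<dots> = (1 - p) ^ card y * (p * c + (1 - p)) ^ (m - card y)" by (rule PI[OF y])
  finally show ?thesis .
qed

lemma g1_closed: assumes x: "x \<subseteq> {..<m}" shows "g1 m p x = 1 - (1 - p) ^ card x"
proof -
  have "g1 m p x = (\<Sum>y\<in>Pow {..<m}. mu m p y * g x y)"
    unfolding g1_def integ1 cube_def by simp
  also have "\<dots> = (\<Sum>y\<in>Pow {..<m}. mu m p y - mu m p y * (if y \<inter> x = {} then 1 else 0) * 1 ^ card y)"
    by (rule sum.cong) (auto simp: g_def Int_commute)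
  also have "\<dots> = 1 - (1 - p) ^ card x"
    using sum_disj[OF x, of p 1] by (simp add: sum_subtractf sum_mu_1)
  finally show ?thesis .
qed

lemma gbar1_closed: "x \<subseteq> {..<m} \<Longrightarrow> gbar1 m p [x] = (1 - p\<^sup>2) ^ m - (1 - p) ^ card x"
  by (simp add: gbar1_def g1_closed phat_def)

lemma gbar2_closed: "gbar2 m p [x, y] = (1 - p\<^sup>2) ^ m - (if x \<inter> y = {} then 1 else 0)"
  by (simp add: gbar2_def g_def phat_def)

lemma powpow: "((c::real) ^ j) ^ k = (c ^ k) ^ j"
  by (simp flip: power_mult add: mult.commute)

lemma case1_closed:
  "normsq m p 1 (contr m p 1 1 0 1 (gbar1 m p) (gbar1 m p))
    = (p * (1 - p) ^ 4 + (1 - p)) ^ m - 4 * (1 - p\<^sup>2) ^ m * (p * (1 - p) ^ 3 + (1 - p)) ^ m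
      + 6 * ((1 - p\<^sup>2) ^ m) ^ 2 * (p * (1 - p) ^ 2 + (1 - p)) ^ m - 3 * ((1 - p\<^sup>2) ^ m) ^ 4"
proof -
  define B where "B = (1 - p\<^sup>2) ^ m"
  define q where "q = 1 - p"
  have c: "contr m p 1 1 0 1 (gbar1 m p) (gbar1 m p) [x] = gbar1 m p [x] * gbar1 m p [x]" for x
    by (simp add: contr_def integ0 Let_def)
  have "normsq m p 1 (contr m p 1 1 0 1 (gbar1 m p) (gbar1 m p))
      = (\<Sum>x\<in>Pow {..<m}. mu m p x * (B - q ^ card x) ^ 4)"
    unfolding normsq_def integ1 cube_def
  proof (rule sum.cong[OF refl])
    fix x assume "x \<in> Pow {..<m}"
    then have "x \<subseteq> {..<m}" by auto
    have sq: "((z::real) * z)\<^sup>2 = z ^ 4" for z by (simp add: power2_eq_square power4_eq_xxxx)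
    show "mu m p x * (contr m p 1 1 0 1 (gbar1 m p) (gbar1 m p) [x])\<^sup>2 = mu m p x * (B - q ^ card x) ^ 4"
      unfolding c sq gbar1_closed[OF \<open>x \<subseteq> {..<m}\<close>] B_def q_def ..
  qed
  also have "\<dots> = (\<Sum>x\<in>Pow {..<m}. B ^ 4 * mu m p x - 4 * B ^ 3 * (mu m p x * q ^ card x)
       + 6 * B ^ 2 * (mu m p x * (q ^ 2) ^ card x) - 4 * B * (mu m p x * (q ^ 3) ^ card x)
       + mu m p x * (q ^ 4) ^ card x)"
    by (rule sum.cong) (auto simp: powpow[of q] algebra_simps power2_eq_square power3_eq_cube power4_eq_xxxx)
  also have "\<dots> = B ^ 4 - 4 * B ^ 3 * (p * q + (1 - p)) ^ m + 6 * B ^ 2 * (p * q ^ 2 + (1 - p)) ^ m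
      - 4 * B * (p * q ^ 3 + (1 - p)) ^ m + (p * q ^ 4 + (1 - p)) ^ m"
    by (simp add: sum.distrib sum_subtractf sum_distrib_left[symmetric] sum_mu_pow sum_mu_1 del: sum_distrib_left)
  also have "(p * q + (1 - p)) = 1 - p\<^sup>2" by (simp add: q_def algebra_simps power2_eq_square)
  finally show ?thesis by (simp add: B_def q_def algebra_simps power2_eq_square power3_eq_cube power4_eq_xxxx)
qed

lemma h3_closed:
  assumes y: "y \<subseteq> {..<m}"
  shows "contr m p 2 1 1 1 (gbar2 m p) (gbar1 m p) [y]
     = (1 - p) ^ card y * (1 - p\<^sup>2) ^ (m - card y) - (1 - p\<^sup>2) ^ m * (1 - p) ^ card y"
proof -
  define B where "B = (1 - p\<^sup>2) ^ m"
  define q where "q = 1 - p"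
  have "contr m p 2 1 1 1 (gbar2 m p) (gbar1 m p) [y] = integ m p 1 (\<lambda>w. gbar2 m p (w @ [y]) * gbar1 m p w)"
    by (simp add: contr_def Let_def numeral_2_eq_2)
  also have "\<dots> = (\<Sum>x\<in>Pow {..<m}. mu m p x * (gbar2 m p [x, y] * gbar1 m p [x]))"
    unfolding integ1 cube_def by simp
  also have "\<dots> = (\<Sum>x\<in>Pow {..<m}. B ^ 2 * mu m p x - B * (mu m p x * q ^ card x)
      - B * (mu m p x * (if x \<inter> y = {} then 1 else 0) * 1 ^ card x)
      + mu m p x * (if x \<inter> y = {} then 1 else 0) * q ^ card x)"
    by (rule sum.cong[OF refl]) (auto simp: gbar2_closed gbar1_closed B_def q_def algebra_simps power2_eq_square)
  also have "\<dots> = B ^ 2 - B * (p * q + (1 - p)) ^ m - B * ((1 - p) ^ card y * (p * 1 + (1 - p)) ^ (m - card y))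
      + (1 - p) ^ card y * (p * q + (1 - p)) ^ (m - card y)"
    by (simp add: sum.distrib sum_subtractf sum_distrib_left[symmetric] sum_mu_pow sum_mu_1 sum_disj[OF y] sum_disj[OF y, of p 1, simplified] del: sum_distrib_left)
  also have "(p * q + (1 - p)) = 1 - p\<^sup>2" by (simp add: q_def algebra_simps power2_eq_square)
  finally show ?thesis by (simp add: B_def q_def power2_eq_square)
qed

lemma case3_closed:
  "normsq m p 1 (contr m p 2 1 1 1 (gbar2 m p) (gbar1 m p))
    = (p * (1 - p) ^ 2 + (1 - p) * (1 - p\<^sup>2) ^ 2) ^ m
      - 2 * ((1 - p\<^sup>2) * (p * (1 - p) ^ 2 + (1 - p) * (1 - p\<^sup>2))) ^ m
      + ((1 - p\<^sup>2) ^ 2 * (p * (1 - p) ^ 2 + (1 - p))) ^ m"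
proof -
  define B where "B = (1 - p\<^sup>2) ^ m"
  define q where "q = 1 - p"
  define b where "b = 1 - p\<^sup>2"
  have "normsq m p 1 (contr m p 2 1 1 1 (gbar2 m p) (gbar1 m p))
     = (\<Sum>y\<in>Pow {..<m}. (p * q ^ 2) ^ card y * (q * b ^ 2) ^ (m - card y)
        - 2 * B * ((p * q ^ 2) ^ card y * (q * b) ^ (m - card y))
        + B ^ 2 * ((p * q ^ 2) ^ card y * q ^ (m - card y)))"
    unfolding normsq_def integ1 cube_def
  proof (rule sum.cong[OF refl])
    fix y assume "y \<in> Pow {..<m}"
    then have y: "y \<subseteq> {..<m}" by auto
    have *: "p ^ k * q ^ j * (q ^ k * b ^ j - B * q ^ k)\<^sup>2 = (p * q ^ 2) ^ k * (q * b ^ 2) ^ j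
        - 2 * B * ((p * q ^ 2) ^ k * (q * b) ^ j) + B ^ 2 * ((p * q ^ 2) ^ k * q ^ j)" for k j
      by (simp add: power_mult_distrib power2_eq_square algebra_simps)
    show "mu m p y * (contr m p 2 1 1 1 (gbar2 m p) (gbar1 m p) [y])\<^sup>2 = (p * q ^ 2) ^ card y * (q * b ^ 2) ^ (m - card y)
        - 2 * B * ((p * q ^ 2) ^ card y * (q * b) ^ (m - card y))
        + B ^ 2 * ((p * q ^ 2) ^ card y * q ^ (m - card y))"
      unfolding h3_closed[OF y] mu_def using *[of "card y" "m - card y"] by (simp add: B_def q_def b_def)
  qed
  also have "\<dots> = (p * q ^ 2 + q * b ^ 2) ^ m - 2 * B * (p * q ^ 2 + q * b) ^ m + B ^ 2 * (p * q ^ 2 + q) ^ m"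
    by (simp add: sum.distrib sum_subtractf sum_distrib_left[symmetric] BIN del: sum_distrib_left)
  finally show ?thesis by (simp add: B_def q_def b_def power_mult_distrib mult.commute flip: power_mult)
qed

lemma F2_closed:
  assumes y: "y \<subseteq> {..<m}" and z: "z \<subseteq> {..<m}"
  shows "contr m p 2 2 1 1 (gbar2 m p) (gbar2 m p) [y, z]
     = ((1 - p\<^sup>2) ^ m)\<^sup>2 - (1 - p\<^sup>2) ^ m * (1 - p) ^ card y - (1 - p\<^sup>2) ^ m * (1 - p) ^ card z
       + (1 - p) ^ card (y \<union> z)"
proof -
  define B where "B = (1 - p\<^sup>2) ^ m"
  have yz: "y \<union> z \<subseteq> {..<m}" using y z by auto
  have "contr m p 2 2 1 1 (gbar2 m p) (gbar2 m p) [y, z] = integ m p 1 (\<lambda>w. gbar2 m p (w @ [y]) * gbar2 m p (w @ [z]))"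
    by (simp add: contr_def Let_def numeral_2_eq_2)
  also have "\<dots> = (\<Sum>x\<in>Pow {..<m}. mu m p x * (gbar2 m p [x, y] * gbar2 m p [x, z]))"
    unfolding integ1 cube_def by simp
  also have "\<dots> = (\<Sum>x\<in>Pow {..<m}. B ^ 2 * mu m p x
      - B * (mu m p x * (if x \<inter> y = {} then 1 else 0))
      - B * (mu m p x * (if x \<inter> z = {} then 1 else 0))
      + mu m p x * (if x \<inter> (y \<union> z) = {} then 1 else 0))"
    by (rule sum.cong[OF refl]) (auto simp: gbar2_closed B_def algebra_simps power2_eq_square)
  also have "\<dots> = B ^ 2 - B * (1 - p) ^ card y - B * (1 - p) ^ card z + (1 - p) ^ card (y \<union> z)"
    by (simp add: sum.distrib sum_subtractf sum_distrib_left[symmetric] sum_mu_1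
        sum_disj[OF y, of p 1, simplified] sum_disj[OF z, of p 1, simplified] sum_disj[OF yz, of p 1, simplified]
        del: sum_distrib_left)
  finally show ?thesis by (simp add: B_def)
qed

lemma L2:
  "(\<Sum>y\<in>Pow {..<m}. \<Sum>z\<in>Pow {..<m}. mu m p y * mu m p z * (\<alpha> ^ card (y \<union> z) * \<beta> ^ card y * \<gamma> ^ card z))
   = (p * p * \<alpha> * \<beta> * \<gamma> + p * (1 - p) * \<alpha> * \<beta> + (1 - p) * p * \<alpha> * \<gamma> + (1 - p) * (1 - p)) ^ m"
proof -
  define f where "f i a c = (if a then p else 1 - p) * (if c then p else 1 - p) * (if a \<or> c then \<alpha> else 1)
     * (if a then \<beta> else 1) * (if c then \<gamma> else 1)" for i :: nat and a c
  have "(\<Sum>y\<in>Pow {..<m}. \<Sum>z\<in>Pow {..<m}. mu m p y * mu m p z * (\<alpha> ^ card (y \<union> z) * \<beta> ^ card y * \<gamma> ^ card z))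
     = (\<Sum>y\<in>Pow {..<m}. \<Sum>z\<in>Pow {..<m}. \<Prod>i<m. f i (i \<in> y) (i \<in> z))"
  proof (intro sum.cong refl)
    fix y z assume "y \<in> Pow {..<m}" "z \<in> Pow {..<m}"
    then have y: "y \<subseteq> {..<m}" and z: "z \<subseteq> {..<m}" and yz: "y \<union> z \<subseteq> {..<m}" by auto
    have "(\<Prod>i<m. f i (i \<in> y) (i \<in> z)) = (\<Prod>i<m. if i \<in> y then p else 1 - p) * (\<Prod>i<m. if i \<in> z then p else 1 - p)
       * (\<Prod>i<m. if i \<in> y \<union> z then \<alpha> else 1) * (\<Prod>i<m. if i \<in> y then \<beta> else 1) * (\<Prod>i<m. if i \<in> z then \<gamma> else 1)"
      by (simp add: f_def prod.distrib)
    also have "\<dots> = mu m p y * mu m p z * (\<alpha> ^ card (y \<union> z) * \<beta> ^ card y * \<gamma> ^ card z)"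
      by (simp only: PI[OF y] PI[OF z] PI[OF yz] mu_def) simp
    finally show "mu m p y * mu m p z * (\<alpha> ^ card (y \<union> z) * \<beta> ^ card y * \<gamma> ^ card z) = (\<Prod>i<m. f i (i \<in> y) (i \<in> z))" by simp
  qed
  also have "\<dots> = (\<Prod>i<m. f i True True + f i True False + f i False True + f i False False)"
    by (rule FL2)
  also have "\<dots> = (p * p * \<alpha> * \<beta> * \<gamma> + p * (1 - p) * \<alpha> * \<beta> + (1 - p) * p * \<alpha> * \<gamma> + (1 - p) * (1 - p)) ^ m"
    by (simp add: f_def)
  finally show ?thesis .
qed

lemma mu_nonneg: "0 \<le> p \<Longrightarrow> p \<le> 1 \<Longrightarrow> 0 \<le> mu m p x"
  by (simp add: mu_def)

lemma case2_bound:
  assumes p: "0 \<le> p" "p \<le> 1"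
  shows "normsq m p 2 (contr m p 2 2 1 1 (gbar2 m p) (gbar2 m p))
    \<le> 2 * ((p * p * (1 - p)\<^sup>2 + p * (1 - p) * (1 - p)\<^sup>2 + (1 - p) * p * (1 - p)\<^sup>2 + (1 - p) * (1 - p)) ^ m
          - 2 * (p * p * (1 - p) ^ 3 + p * (1 - p) * (1 - p)\<^sup>2 + (1 - p) * p * (1 - p)\<^sup>2 + (1 - p) * (1 - p)) ^ m
          + (p * p * (1 - p) ^ 4 + p * (1 - p) * (1 - p)\<^sup>2 + (1 - p) * p * (1 - p)\<^sup>2 + (1 - p) * (1 - p)) ^ m)
      + 2 * ((p * (1 - p)\<^sup>2 + (1 - p)) ^ m - ((1 - p\<^sup>2) ^ m)\<^sup>2)\<^sup>2"
proof -
  define B where "B = (1 - p\<^sup>2) ^ m"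
  define q where "q = 1 - p"
  define X where "X y z = q ^ card (y \<union> z) - q ^ card y * q ^ card z" for y z :: "nat set"
  define Y where "Y y = q ^ card y - B" for y :: "nat set"
  have "normsq m p 2 (contr m p 2 2 1 1 (gbar2 m p) (gbar2 m p))
      = (\<Sum>y\<in>Pow {..<m}. \<Sum>z\<in>Pow {..<m}. mu m p y * mu m p z * (X y z + Y y * Y z)\<^sup>2)"
    unfolding normsq_def integ2 cube_def
  proof (intro sum.cong refl)
    fix y z assume "y \<in> Pow {..<m}" "z \<in> Pow {..<m}"
    then have y: "y \<subseteq> {..<m}" and z: "z \<subseteq> {..<m}" by auto
    show "mu m p y * mu m p z * (contr m p 2 2 1 1 (gbar2 m p) (gbar2 m p) [y, z])\<^sup>2 = mu m p y * mu m p z * (X y z + Y y * Y z)\<^sup>2"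
      unfolding F2_closed[OF y z] X_def Y_def B_def q_def by (simp add: algebra_simps power2_eq_square)
  qed
  also have "\<dots> \<le> (\<Sum>y\<in>Pow {..<m}. \<Sum>z\<in>Pow {..<m}. mu m p y * mu m p z * (2 * (X y z)\<^sup>2 + 2 * (Y y * Y z)\<^sup>2))"
  proof (intro sum_mono)
    fix y z
    have "(X y z + Y y * Y z)\<^sup>2 \<le> 2 * (X y z)\<^sup>2 + 2 * (Y y * Y z)\<^sup>2"
      using sum_squares_ge_zero[of 0 0] 
      by (smt (verit) power2_diff zero_le_power2[of "X y z - Y y * Y z"] power2_sum)
    then show "mu m p y * mu m p z * (X y z + Y y * Y z)\<^sup>2 \<le> mu m p y * mu m p z * (2 * (X y z)\<^sup>2 + 2 * (Y y * Y z)\<^sup>2)"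
      using mu_nonneg[OF p] by (intro mult_left_mono) auto
  qed
  also have "\<dots> = 2 * (\<Sum>y\<in>Pow {..<m}. \<Sum>z\<in>Pow {..<m}. mu m p y * mu m p z * (X y z)\<^sup>2)
      + 2 * (\<Sum>y\<in>Pow {..<m}. \<Sum>z\<in>Pow {..<m}. (mu m p y * (Y y)\<^sup>2) * (mu m p z * (Y z)\<^sup>2))"
    by (simp add: sum.distrib sum_distrib_left algebra_simps power2_eq_square)
  also have "(\<Sum>y\<in>Pow {..<m}. \<Sum>z\<in>Pow {..<m}. (mu m p y * (Y y)\<^sup>2) * (mu m p z * (Y z)\<^sup>2))
      = (\<Sum>y\<in>Pow {..<m}. mu m p y * (Y y)\<^sup>2)\<^sup>2"
    by (simp add: power2_eq_square sum_product)
  also have "(\<Sum>y\<in>Pow {..<m}. mu m p y * (Y y)\<^sup>2) = (p * q\<^sup>2 + (1 - p)) ^ m - B\<^sup>2"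
  proof -
    have "(\<Sum>y\<in>Pow {..<m}. mu m p y * (Y y)\<^sup>2) = (\<Sum>y\<in>Pow {..<m}. mu m p y * (q\<^sup>2) ^ card y
        - 2 * B * (mu m p y * q ^ card y) + B\<^sup>2 * mu m p y)"
      by (rule sum.cong[OF refl]) (simp add: Y_def powpow[of q] power2_eq_square algebra_simps)
    also have "\<dots> = (p * q\<^sup>2 + (1 - p)) ^ m - 2 * B * (p * q + (1 - p)) ^ m + B\<^sup>2"
      by (simp add: sum.distrib sum_subtractf sum_distrib_left[symmetric] sum_mu_pow sum_mu_1 del: sum_distrib_left)
    also have "p * q + (1 - p) = 1 - p\<^sup>2" by (simp add: q_def algebra_simps power2_eq_square)
    finally show ?thesis by (simp add: B_def power2_eq_square)
  qed
  also have "(\<Sum>y\<in>Pow {..<m}. \<Sum>z\<in>Pow {..<m}. mu m p y * mu m p z * (X y z)\<^sup>2)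
     = (\<Sum>y\<in>Pow {..<m}. \<Sum>z\<in>Pow {..<m}. mu m p y * mu m p z * ((q\<^sup>2) ^ card (y \<union> z) * 1 ^ card y * 1 ^ card z)
        - 2 * (mu m p y * mu m p z * (q ^ card (y \<union> z) * q ^ card y * q ^ card z))
        + mu m p y * mu m p z * (1 ^ card (y \<union> z) * (q\<^sup>2) ^ card y * (q\<^sup>2) ^ card z))"
    by (intro sum.cong refl) (simp add: X_def powpow[of q] power2_eq_square algebra_simps)
  also have "\<dots> = (p * p * (1 - p)\<^sup>2 + p * (1 - p) * (1 - p)\<^sup>2 + (1 - p) * p * (1 - p)\<^sup>2 + (1 - p) * (1 - p)) ^ m
          - 2 * (p * p * (1 - p) ^ 3 + p * (1 - p) * (1 - p)\<^sup>2 + (1 - p) * p * (1 - p)\<^sup>2 + (1 - p) * (1 - p)) ^ m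
          + (p * p * (1 - p) ^ 4 + p * (1 - p) * (1 - p)\<^sup>2 + (1 - p) * p * (1 - p)\<^sup>2 + (1 - p) * (1 - p)) ^ m"
    apply (simp only: sum.distrib sum_subtractf sum_distrib_left[symmetric] L2)
    apply (simp add: q_def power2_eq_square power3_eq_cube power4_eq_xxxx algebra_simps)
    done
  finally show ?thesis by (simp add: q_def B_def)
qed



lemma mono_expr:
  fixes m A B C D E F A' B' C' D' E' F' :: real
  assumes "0 \<le> m" "0 \<le> A" "A \<le> A'" "0 \<le> B" "B \<le> B'" "0 \<le> C" "C \<le> C'" "0 \<le> D" "D \<le> D'"
    "0 \<le> E" "E \<le> E'" "0 \<le> F" "F \<le> F'"
  shows "m * (4 * A * (m * (3 * B * (m * C) + D)) + 6 * E * (m * C) + F)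
       \<le> m * (4 * A' * (m * (3 * B' * (m * C') + D')) + 6 * E' * (m * C') + F')"
  using assms by (intro add_mono mult_mono mult_left_mono mult_nonneg_nonneg add_nonneg_nonneg order_refl) auto

lemma powpowE: "((c::real) ^ j) ^ k = (c ^ k) ^ j"
  by (simp flip: power_mult add: mult.commute)

lemma powpow2: "((c::real) ^ m)\<^sup>2 = (c\<^sup>2) ^ m"
  by (simp flip: power_mult add: mult.commute)

context
  fixes p :: real
  assumes p0: "0 < p" and p1: "p \<le> 1/10"
begin

lemma pp: "p ^ 2 \<le> p / 10" "p ^ 3 \<le> p ^ 2 / 10" "p ^ 4 \<le> p ^ 3 / 10" "p ^ 5 \<le> p ^ 4 / 10"
  "p ^ 6 \<le> p ^ 5 / 10" "p ^ 7 \<le> p ^ 6 / 10"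
proof -
  have "p * p \<le> p * (1/10)" using p0 p1 by (intro mult_left_mono) auto
  then show "p ^ 2 \<le> p / 10" by (simp add: power2_eq_square)
  have "\<And>k. p ^ Suc (Suc k) \<le> p ^ (Suc k) / 10"
  proof -
    fix k :: nat
    have "p ^ Suc k * p \<le> p ^ Suc k * (1/10)" using p0 p1 by (intro mult_left_mono) auto
    then show "p ^ Suc (Suc k) \<le> p ^ (Suc k) / 10" by (simp add: mult.commute)
  qed
  from this[of 1] this[of 2] this[of 3] this[of 4] this[of 5]
  show "p ^ 3 \<le> p ^ 2 / 10" "p ^ 4 \<le> p ^ 3 / 10" "p ^ 5 \<le> p ^ 4 / 10"
  "p ^ 6 \<le> p ^ 5 / 10" "p ^ 7 \<le> p ^ 6 / 10" by (simp_all add: numeral_eq_Suc)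
qed

lemma ppos: "0 < p ^ 2" "0 < p ^ 3" "0 < p ^ 4" "0 < p ^ 5" "0 < p ^ 6" "0 < p^7"
  using p0 by auto

lemma expbound:
  assumes A: "0 \<le> A" "A \<le> 1 - c * p ^ 2 + c * p ^ 3" and c: "0 \<le> c" and mp: "real m * p ^ 3 \<le> 1"
  shows "A ^ m \<le> exp c * exp (- c * real m * p ^ 2)"
proof -
  have "A ^ m \<le> exp (real m * (- c * p ^ 2 + c * p ^ 3))" by (rule pow_exp) (use A in auto)
  also have "real m * (- c * p ^ 2 + c * p ^ 3) = - c * real m * p ^ 2 + c * (real m * p ^ 3)" by (simp add: algebra_simps)
  also have "exp (\<dots>) = exp (- c * real m * p ^ 2) * exp (c * (real m * p ^ 3))" by (rule exp_add)
  also have "\<dots> \<le> exp (- c * real m * p ^ 2) * exp c"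
    using mp c by (intro mult_left_mono) (auto simp: mult_left_le)
  finally show ?thesis by (simp add: mult.commute)
qed

lemma qb: "9/10 \<le> 1 - p" "1 - p \<le> 1" "99/100 \<le> 1 - p\<^sup>2" "1 - p\<^sup>2 \<le> 1"
  using p0 p1 pp(1) by auto

lemma case3_num:
  assumes m: "2 \<le> m" and mp: "real m * p ^ 3 \<le> 1"
  shows "(p * (1 - p) ^ 2 + (1 - p) * (1 - p\<^sup>2) ^ 2) ^ m
      - 2 * ((1 - p\<^sup>2) * (p * (1 - p) ^ 2 + (1 - p) * (1 - p\<^sup>2))) ^ m
      + ((1 - p\<^sup>2) ^ 2 * (p * (1 - p) ^ 2 + (1 - p))) ^ m
    \<le> 8 * exp 4 * (real m * p ^ 5 + (real m * p ^ 3)\<^sup>2) * exp (- 4 * real m * p\<^sup>2)"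
proof -
  define q where "q = 1 - p"
  define b where "b = 1 - p\<^sup>2"
  define A1 where "A1 = p * q ^ 2 + q * b ^ 2"
  define A2 where "A2 = b * (p * q ^ 2 + q * b)"
  define A3 where "A3 = b ^ 2 * (p * q ^ 2 + q)"
  define \<delta> where "\<delta> = p ^ 3 * q ^ 2"
  have q: "9/10 \<le> q" "q \<le> 1" and b: "99/100 \<le> b" "b \<le> 1" using qb unfolding q_def b_def by auto
  have d12: "A1 - A2 = \<delta>" unfolding A1_def A2_def \<delta>_def b_def
    by (simp add: algebra_simps power2_eq_square power3_eq_cube)
  have d23: "A2 - A3 = b * \<delta>" unfolding A3_def A2_def \<delta>_def b_def
    by (simp add: algebra_simps power2_eq_square power3_eq_cube)
  have dpos: "0 \<le> \<delta>" "\<delta> \<le> p ^ 3" unfolding \<delta>_def using p0 q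
    by (auto simp: mult_left_le power_le_one)
  have a3: "1/2 \<le> A3"
  proof -
    have "(99/100) * (99/100) * (9/10) \<le> b * b * q" using b q by (intro mult_mono) auto
    also have "b * b * q \<le> A3" unfolding A3_def using b q p0 by (simp add: power2_eq_square)
    finally show ?thesis by simp
  qed
  have Phi: "A1 ^ m - 2 * A2 ^ m + A3 ^ m \<le> A1 ^ m * (8 * real m ^ 2 * \<delta> ^ 2 + 2 * real m * \<delta> * (1 - b))"
  proof (rule Phi_bound[OF a3 _ _ d12 d23 _ _ m])
    have "0 \<le> b * \<delta>" using dpos b by simp
    then show "A3 \<le> A2" using d23 by simp
  qed (use d12 d23 dpos b in auto)
  have "8 * real m ^ 2 * \<delta> ^ 2 + 2 * real m * \<delta> * (1 - b) \<le> 8 * real m ^ 2 * (p ^ 3) ^ 2 + 2 * real m * p ^ 3 * p ^ 2"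
  proof (rule add_mono)
    show "8 * real m ^ 2 * \<delta> ^ 2 \<le> 8 * real m ^ 2 * (p ^ 3) ^ 2"
      using dpos by (intro mult_left_mono power_mono) auto
    have "(2 * real m * p ^ 2) * \<delta> \<le> (2 * real m * p ^ 2) * p ^ 3"
      using dpos by (intro mult_left_mono) auto
    then show "2 * real m * \<delta> * (1 - b) \<le> 2 * real m * p ^ 3 * p ^ 2"
      unfolding b_def by (simp add: algebra_simps)
  qed
  also have "\<dots> = 8 * (real m * p ^ 3)\<^sup>2 + 2 * (real m * p ^ 5)" by (simp add: power_mult_distrib power2_eq_square algebra_simps eval_nat_numeral)
  also have "\<dots> \<le> 8 * (real m * p ^ 5 + (real m * p ^ 3)\<^sup>2)" using p0 by simp
  finally have br: "8 * real m ^ 2 * \<delta> ^ 2 + 2 * real m * \<delta> * (1 - b) \<le> 8 * (real m * p ^ 5 + (real m * p ^ 3)\<^sup>2)" .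
  have A1e: "A1 ^ m \<le> exp 4 * exp (- 4 * real m * p ^ 2)"
  proof (rule expbound[OF _ _ _ mp])
    show "0 \<le> A1" unfolding A1_def using p0 q by simp
    have "A1 = 1 - 4 * p ^ 2 + 3 * p ^ 3 + p ^ 4 - p ^ 5" unfolding A1_def q_def b_def
      by (simp add: algebra_simps power2_eq_square power3_eq_cube power4_eq_xxxx eval_nat_numeral)
    then show "A1 \<le> 1 - 4 * p ^ 2 + 4 * p ^ 3" using pp ppos by linarith
  qed simp
  have "A1 ^ m - 2 * A2 ^ m + A3 ^ m \<le> (exp 4 * exp (- 4 * real m * p ^ 2)) * (8 * (real m * p ^ 5 + (real m * p ^ 3)\<^sup>2))"
  proof -
    have "0 \<le> 8 * real m ^ 2 * \<delta> ^ 2 + 2 * real m * \<delta> * (1 - b)" using dpos b by simp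
    then have "A1 ^ m * (8 * real m ^ 2 * \<delta> ^ 2 + 2 * real m * \<delta> * (1 - b))
        \<le> (exp 4 * exp (- 4 * real m * p ^ 2)) * (8 * (real m * p ^ 5 + (real m * p ^ 3)\<^sup>2))"
      using A1e br by (intro mult_mono) auto
    then show ?thesis using Phi by linarith
  qed
  then show ?thesis unfolding A1_def A2_def A3_def q_def b_def by (simp add: algebra_simps)
qed

lemma case2_num:
  assumes m: "2 \<le> m" and mp: "real m * p ^ 3 \<le> 1"
  shows "2 * ((p * p * (1 - p)\<^sup>2 + p * (1 - p) * (1 - p)\<^sup>2 + (1 - p) * p * (1 - p)\<^sup>2 + (1 - p) * (1 - p)) ^ m
          - 2 * (p * p * (1 - p) ^ 3 + p * (1 - p) * (1 - p)\<^sup>2 + (1 - p) * p * (1 - p)\<^sup>2 + (1 - p) * (1 - p)) ^ m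
          + (p * p * (1 - p) ^ 4 + p * (1 - p) * (1 - p)\<^sup>2 + (1 - p) * p * (1 - p)\<^sup>2 + (1 - p) * (1 - p)) ^ m)
      + 2 * ((p * (1 - p)\<^sup>2 + (1 - p)) ^ m - ((1 - p\<^sup>2) ^ m)\<^sup>2)\<^sup>2
    \<le> 24 * exp 4 * (real m * p ^ 4 + (real m * p ^ 3)\<^sup>2) * exp (- 4 * real m * p\<^sup>2)"
proof -
  define q where "q = 1 - p"
  define b where "b = 1 - p\<^sup>2"
  define B1 where "B1 = p * p * q\<^sup>2 + p * q * q\<^sup>2 + q * p * q\<^sup>2 + q * q"
  define B2 where "B2 = p * p * q ^ 3 + p * q * q\<^sup>2 + q * p * q\<^sup>2 + q * q"
  define B3 where "B3 = p * p * q ^ 4 + p * q * q\<^sup>2 + q * p * q\<^sup>2 + q * q"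
  define a2 where "a2 = p * q\<^sup>2 + q"
  define \<delta> where "\<delta> = p ^ 3 * q ^ 2"
  define E where "E = exp (- 4 * real m * p\<^sup>2)"
  have q: "9/10 \<le> q" "q \<le> 1" and b: "99/100 \<le> b" "b \<le> 1" using qb unfolding q_def b_def by auto
  have d12: "B1 - B2 = \<delta>" unfolding B1_def B2_def \<delta>_def q_def
    by (simp add: algebra_simps power2_eq_square power3_eq_cube)
  have d23: "B2 - B3 = q * \<delta>" unfolding B3_def B2_def \<delta>_def q_def
    by (simp add: algebra_simps power2_eq_square power3_eq_cube power4_eq_xxxx)
  have dpos: "0 \<le> \<delta>" "\<delta> \<le> p ^ 3" unfolding \<delta>_def using p0 q
    by (auto simp: mult_left_le power_le_one)
  have b3: "1/2 \<le> B3"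
  proof -
    have "(9/10) * (9/10) \<le> q * q" using q by (intro mult_mono) auto
    also have "q * q \<le> B3" unfolding B3_def using q p0 by simp
    finally show ?thesis by simp
  qed
  have Phi: "B1 ^ m - 2 * B2 ^ m + B3 ^ m \<le> B1 ^ m * (8 * real m ^ 2 * \<delta> ^ 2 + 2 * real m * \<delta> * (1 - q))"
  proof (rule Phi_bound[OF b3 _ _ d12 d23 _ _ m])
    have "0 \<le> q * \<delta>" using dpos q by simp
    then show "B3 \<le> B2" using d23 by simp
  qed (use d12 d23 dpos q in auto)
  have "8 * real m ^ 2 * \<delta> ^ 2 + 2 * real m * \<delta> * (1 - q) \<le> 8 * real m ^ 2 * (p ^ 3) ^ 2 + 2 * real m * p ^ 3 * p"
  proof (rule add_mono)
    show "8 * real m ^ 2 * \<delta> ^ 2 \<le> 8 * real m ^ 2 * (p ^ 3) ^ 2"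
      using dpos by (intro mult_left_mono power_mono) auto
    have "(2 * real m * p) * \<delta> \<le> (2 * real m * p) * p ^ 3"
      using dpos p0 by (intro mult_left_mono) auto
    then show "2 * real m * \<delta> * (1 - q) \<le> 2 * real m * p ^ 3 * p"
      unfolding q_def by (simp add: algebra_simps)
  qed
  also have "\<dots> = 8 * (real m * p ^ 3)\<^sup>2 + 2 * (real m * p ^ 4)" by (simp add: power_mult_distrib power2_eq_square algebra_simps eval_nat_numeral)
  finally have br: "8 * real m ^ 2 * \<delta> ^ 2 + 2 * real m * \<delta> * (1 - q) \<le> 8 * (real m * p ^ 3)\<^sup>2 + 2 * (real m * p ^ 4)" .
  have B1e: "B1 ^ m \<le> exp 4 * E" unfolding E_def
  proof (rule expbound[OF _ _ _ mp])
    show "0 \<le> B1" unfolding B1_def using p0 q by simp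
    have "B1 = 1 - 4 * p ^ 2 + 4 * p ^ 3 - p ^ 4" unfolding B1_def q_def
      by (simp add: algebra_simps power2_eq_square power3_eq_cube power4_eq_xxxx eval_nat_numeral)
    then show "B1 \<le> 1 - 4 * p ^ 2 + 4 * p ^ 3" using pp ppos by linarith
  qed simp
  have X: "B1 ^ m - 2 * B2 ^ m + B3 ^ m \<le> exp 4 * E * (8 * (real m * p ^ 3)\<^sup>2 + 2 * (real m * p ^ 4))"
  proof -
    have "0 \<le> 8 * real m ^ 2 * \<delta> ^ 2 + 2 * real m * \<delta> * (1 - q)" using dpos q by simp
    then have "B1 ^ m * (8 * real m ^ 2 * \<delta> ^ 2 + 2 * real m * \<delta> * (1 - q)) \<le> exp 4 * E * (8 * (real m * p ^ 3)\<^sup>2 + 2 * (real m * p ^ 4))"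
      using B1e br by (intro mult_mono) (auto simp: E_def)
    then show ?thesis using Phi by linarith
  qed
  obtain n where n: "m = Suc n" using m by (cases m) auto
  have a2b: "a2 - b ^ 2 = p ^ 3 * q" unfolding a2_def b_def q_def
    by (simp add: algebra_simps power2_eq_square power3_eq_cube)
  have a2h: "1/2 \<le> a2"
  proof -
    have "0 \<le> p * q\<^sup>2" using p0 by simp
    then show ?thesis unfolding a2_def using q by linarith
  qed
  have b2a2: "b ^ 2 \<le> a2"
  proof -
    have "0 \<le> p ^ 3 * q" using p0 q by simp
    then show ?thesis using a2b by linarith
  qed
  have Y0: "0 \<le> a2 ^ m - (b ^ 2) ^ m" using b2a2 b by (simp add: power_mono)
  have Y1: "a2 ^ m - (b ^ 2) ^ m \<le> 2 * real m * p ^ 3 * a2 ^ m"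
  proof -
    have "a2 ^ m - (b ^ 2) ^ m \<le> real m * (p ^ 3 * q) * a2 ^ n"
      using pdu[of "b ^ 2" a2 n] b2a2 a2b n by simp
    also have "\<dots> \<le> real m * p ^ 3 * (2 * a2 ^ m)"
    proof (rule mult_mono)
      have "p ^ 3 * q \<le> p ^ 3" using q p0 by (simp add: mult_left_le)
      then show "real m * (p ^ 3 * q) \<le> real m * p ^ 3" by (intro mult_left_mono) auto
      show "a2 ^ n \<le> 2 * a2 ^ m" using pow_half[OF a2h, of 1 m] n by simp
    qed (use p0 a2h in auto)
    finally show ?thesis by simp
  qed
  have a2e: "a2 ^ m \<le> exp 2 * exp (- 2 * real m * p ^ 2)"
  proof (rule expbound[OF _ _ _ mp])
    show "0 \<le> a2" using a2h by simp
    have "a2 = 1 - 2 * p ^ 2 + p ^ 3" unfolding a2_def q_def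
      by (simp add: algebra_simps power2_eq_square power3_eq_cube)
    then show "a2 \<le> 1 - 2 * p ^ 2 + 2 * p ^ 3" using ppos by linarith
  qed simp
  have Y2: "a2 ^ m - (b ^ 2) ^ m \<le> 2 * real m * p ^ 3 * (exp 2 * exp (- 2 * real m * p ^ 2))"
  proof -
    have "2 * real m * p ^ 3 * a2 ^ m \<le> 2 * real m * p ^ 3 * (exp 2 * exp (- 2 * real m * p ^ 2))"
      using a2e p0 by (intro mult_left_mono) auto
    then show ?thesis using Y1 by linarith
  qed
  have "(a2 ^ m - (b ^ 2) ^ m)\<^sup>2 \<le> (2 * real m * p ^ 3 * (exp 2 * exp (- 2 * real m * p ^ 2)))\<^sup>2"
    using Y2 Y0 by (rule power_mono)
  also have "\<dots> = 4 * exp 4 * (real m * p ^ 3)\<^sup>2 * E"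
  proof -
    have "(exp 2 * exp (- 2 * real m * p ^ 2))\<^sup>2 = exp 4 * E"
      unfolding E_def power2_eq_square by (simp add: algebra_simps flip: exp_add)
    then show ?thesis by (simp add: power_mult_distrib power2_eq_square algebra_simps)
  qed
  finally have Y: "(a2 ^ m - (b ^ 2) ^ m)\<^sup>2 \<le> 4 * exp 4 * (real m * p ^ 3)\<^sup>2 * E" .
  have "2 * (B1 ^ m - 2 * B2 ^ m + B3 ^ m) + 2 * (a2 ^ m - (b ^ 2) ^ m)\<^sup>2
      \<le> 2 * (exp 4 * E * (8 * (real m * p ^ 3)\<^sup>2 + 2 * (real m * p ^ 4))) + 2 * (4 * exp 4 * (real m * p ^ 3)\<^sup>2 * E)"
    using X Y by (intro add_mono mult_left_mono) auto
  also have "\<dots> = exp 4 * E * (24 * (real m * p ^ 3)\<^sup>2 + 4 * (real m * p ^ 4))" by (simp add: algebra_simps)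
  also have "\<dots> \<le> exp 4 * E * (24 * (real m * p ^ 4 + (real m * p ^ 3)\<^sup>2))"
    using p0 by (intro mult_left_mono) (auto simp: E_def)
  finally have fin: "2 * (B1 ^ m - 2 * B2 ^ m + B3 ^ m) + 2 * (a2 ^ m - (b ^ 2) ^ m)\<^sup>2
      \<le> 24 * exp 4 * (real m * p ^ 4 + (real m * p ^ 3)\<^sup>2) * E" by (simp add: algebra_simps)
  have bb: "((1 - p\<^sup>2) ^ m)\<^sup>2 = (b ^ 2) ^ m" unfolding b_def by (simp add: powpow2)
  show ?thesis using fin unfolding bb unfolding B1_def B2_def B3_def a2_def q_def E_def .
qed

lemma divb: "1/2 \<le> (y::real) \<Longrightarrow> \<bar>x\<bar> \<le> z \<Longrightarrow> \<bar>x / y\<bar> \<le> 2 * z"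
proof -
  assume y: "1/2 \<le> y" and x: "\<bar>x\<bar> \<le> z"
  have "z * 1 \<le> z * (2 * y)" using x y by (intro mult_left_mono) auto
  then have "\<bar>x\<bar> \<le> 2 * z * y" using x by (simp add: algebra_simps)
  then show ?thesis using y by (simp add: abs_divide pos_divide_le_eq)
qed

lemma case1_num:
  assumes mp: "real m * p ^ 3 \<le> 1"
  shows "(p * (1 - p) ^ 4 + (1 - p)) ^ m - 4 * (1 - p\<^sup>2) ^ m * (p * (1 - p) ^ 3 + (1 - p)) ^ m
      + 6 * ((1 - p\<^sup>2) ^ m) ^ 2 * (p * (1 - p) ^ 2 + (1 - p)) ^ m - 3 * ((1 - p\<^sup>2) ^ m) ^ 4
    \<le> 2224 * exp 22 * (real m * p ^ 5 + (real m * p ^ 3)\<^sup>2) * exp (- 4 * real m * p\<^sup>2)"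
proof -
  define q where "q = 1 - p"
  define b where "b = 1 - p\<^sup>2"
  define a2 where "a2 = p * q ^ 2 + q"
  define a3 where "a3 = p * q ^ 3 + q"
  define a4 where "a4 = p * q ^ 4 + q"
  define B where "B = b ^ m"
  define t2 where "t2 = a2 / b ^ 2"
  define t3 where "t3 = a3 / b ^ 3"
  define t4 where "t4 = a4 / b ^ 4"
  define d2 where "d2 = p ^ 3 * q / b ^ 2"
  define d3 where "d3 = p ^ 4 * q * (p - q) / b ^ 3"
  define d4 where "d4 = p ^ 5 * q * (q ^ 3 + p ^ 3) / b ^ 4"
  define \<tau> where "\<tau> = 1 + 22 * p ^ 3"
  define W where "W = real m * p ^ 3"
  have q: "9/10 \<le> q" "q \<le> 1" and b: "99/100 \<le> b" "b \<le> 1" using qb unfolding q_def b_def by auto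
  have bpos: "0 < b" using b by simp
  have b2: "1/2 \<le> b ^ 2" "1/2 \<le> b ^ 3" "1/2 \<le> b ^ 4"
  proof -
    have "(99/100) ^ 2 \<le> b ^ 2" "(99/100) ^ 3 \<le> b ^ 3" "(99/100) ^ 4 \<le> b ^ 4" using b by (intro power_mono; simp)+
    moreover have "(1/2::real) \<le> (99/100) ^ 2" "(1/2::real) \<le> (99/100) ^ 3" "(1/2::real) \<le> (99/100) ^ 4"
      by (simp_all add: eval_nat_numeral)
    ultimately show "1/2 \<le> b ^ 2" "1/2 \<le> b ^ 3" "1/2 \<le> b ^ 4" by linarith+
  qed
  have ia2: "a2 = b ^ 2 + p ^ 3 * q" unfolding a2_def b_def q_def
    by (simp add: algebra_simps power2_eq_square power3_eq_cube)
  have ia3: "a3 = b ^ 3 + 3 * b * (p ^ 3 * q) + p ^ 4 * q * (p - q)" unfolding a3_def b_def q_def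
    by (simp add: algebra_simps power2_eq_square power3_eq_cube power4_eq_xxxx)
  have ia4: "a4 = b ^ 4 + 6 * b ^ 2 * (p ^ 3 * q) + 4 * b * (p ^ 4 * q * (p - q)) + p ^ 5 * q * (q ^ 3 + p ^ 3)"
    unfolding a4_def b_def q_def
    by (simp add: algebra_simps power2_eq_square power3_eq_cube power4_eq_xxxx eval_nat_numeral)
  have it2: "t2 = 1 + d2" unfolding t2_def d2_def ia2 using bpos by (simp add: field_simps)
  have it3: "t3 = 1 + 3 * d2 + d3" unfolding t3_def d2_def d3_def ia3 using bpos
    by (simp add: field_simps power2_eq_square power3_eq_cube)
  have it4: "t4 = 1 + 6 * d2 + 4 * d3 + d4" unfolding t4_def d2_def d3_def d4_def ia4 using bpos
    by (simp add: field_simps power2_eq_square power3_eq_cube power4_eq_xxxx)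
  have pq1: "p ^ 3 * q \<le> p ^ 3" using q p0 by (simp add: mult_left_le)
  have e2: "\<bar>d2\<bar> \<le> 2 * p ^ 3" unfolding d2_def
    by (rule divb[OF b2(1)]) (use pq1 q p0 in simp)
  have e3: "\<bar>d3\<bar> \<le> 2 * p ^ 4" unfolding d3_def
  proof (rule divb[OF b2(2)])
    have "q * \<bar>p - q\<bar> \<le> 1 * 1" using q p0 p1 by (intro mult_mono) auto
    then have "p ^ 4 * (q * \<bar>p - q\<bar>) \<le> p ^ 4 * 1" using p0 by (intro mult_left_mono) auto
    then show "\<bar>p ^ 4 * q * (p - q)\<bar> \<le> p ^ 4" using p0 q by (simp add: abs_mult mult.assoc)
  qed
  have e4: "\<bar>d4\<bar> \<le> 2 * p ^ 5" unfolding d4_def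
  proof (rule divb[OF b2(3)])
    have "q ^ 3 \<le> q" using q by (simp add: power_le_one power3_eq_cube mult_le_one mult_left_le)
    moreover have "p ^ 3 \<le> p" using p0 p1 by (simp add: power3_eq_cube mult_le_one mult_left_le)
    ultimately have "q ^ 3 + p ^ 3 \<le> 1" unfolding q_def by simp
    then have "q * (q ^ 3 + p ^ 3) \<le> 1 * 1" using q p0 by (intro mult_mono) auto
    then have "p ^ 5 * (q * (q ^ 3 + p ^ 3)) \<le> p ^ 5 * 1" using p0 by (intro mult_left_mono) auto
    then show "\<bar>p ^ 5 * q * (q ^ 3 + p ^ 3)\<bar> \<le> p ^ 5" using p0 q by (simp add: abs_mult mult.assoc)
  qed
  note ee = abs_le_D1[OF e2] abs_le_D2[OF e2] abs_le_D1[OF e3] abs_le_D2[OF e3] abs_le_D1[OF e4] abs_le_D2[OF e4]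
  note P = pp ppos
  have tau1: "1 \<le> \<tau>" unfolding \<tau>_def using p0 by simp
  have tt2: "\<bar>t2\<bar> \<le> \<tau>" unfolding \<tau>_def it2 by (rule abs_leI) (use ee P in linarith)+
  have tt3: "\<bar>t3\<bar> \<le> \<tau>" unfolding \<tau>_def it3 by (rule abs_leI) (use ee P in linarith)+
  have tt4: "\<bar>t4\<bar> \<le> \<tau>" unfolding \<tau>_def it4 by (rule abs_leI) (use ee P in linarith)+
  have M4b: "\<bar>M4 t2 t3 t4 m\<bar> \<le> real m * (4 * \<bar>t4 - t3\<bar> * (real m * (3 * \<bar>t3 - t2\<bar> * (real m * \<bar>t2 - 1\<bar>) + \<bar>t3 - 3 * t2 + 2\<bar>))
      + 6 * \<bar>t4 - 2 * t3 + t2\<bar> * (real m * \<bar>t2 - 1\<bar>) + \<bar>t4 - 4 * t3 + 6 * t2 - 3\<bar>) * \<tau> ^ m"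
    by (rule M4_bound[OF tau1 tt2 tt3 tt4])
  also have "\<dots> \<le> real m * (4 * (14 * p ^ 3) * (real m * (3 * (6 * p ^ 3) * (real m * (2 * p ^ 3)) + 2 * p ^ 4))
      + 6 * (8 * p ^ 3) * (real m * (2 * p ^ 3)) + 2 * p ^ 5) * \<tau> ^ m"
  proof (rule mult_right_mono)
    show "0 \<le> \<tau> ^ m" using tau1 by simp
    show "real m * (4 * \<bar>t4 - t3\<bar> * (real m * (3 * \<bar>t3 - t2\<bar> * (real m * \<bar>t2 - 1\<bar>) + \<bar>t3 - 3 * t2 + 2\<bar>))
      + 6 * \<bar>t4 - 2 * t3 + t2\<bar> * (real m * \<bar>t2 - 1\<bar>) + \<bar>t4 - 4 * t3 + 6 * t2 - 3\<bar>)
      \<le> real m * (4 * (14 * p ^ 3) * (real m * (3 * (6 * p ^ 3) * (real m * (2 * p ^ 3)) + 2 * p ^ 4))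
      + 6 * (8 * p ^ 3) * (real m * (2 * p ^ 3)) + 2 * p ^ 5)"
    proof (rule mono_expr)
      show "\<bar>t4 - t3\<bar> \<le> 14 * p ^ 3" unfolding it3 it4 by (rule abs_leI) (use ee P in linarith)+
      show "\<bar>t3 - t2\<bar> \<le> 6 * p ^ 3" unfolding it3 it2 by (rule abs_leI) (use ee P in linarith)+
      show "\<bar>t2 - 1\<bar> \<le> 2 * p ^ 3" unfolding it2 by (rule abs_leI) (use ee P in linarith)+
      have "t3 - 3 * t2 + 2 = d3" unfolding it3 it2 by simp
      then show "\<bar>t3 - 3 * t2 + 2\<bar> \<le> 2 * p ^ 4" using e3 by simp
      have "t4 - 2 * t3 + t2 = d2 + 2 * d3 + d4" unfolding it4 it3 it2 by (simp add: algebra_simps)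
      then show "\<bar>t4 - 2 * t3 + t2\<bar> \<le> 8 * p ^ 3" by (simp only:) (rule abs_leI; use ee P in linarith)
      have "t4 - 4 * t3 + 6 * t2 - 3 = d4" unfolding it4 it3 it2 by simp
      then show "\<bar>t4 - 4 * t3 + 6 * t2 - 3\<bar> \<le> 2 * p ^ 5" using e4 by simp
    qed auto
  qed
  also have "\<dots> = (2016 * W ^ 3 + 112 * W ^ 2 * p + 96 * W ^ 2 + 2 * (real m * p ^ 5)) * \<tau> ^ m"
    unfolding W_def by (simp add: algebra_simps power_mult_distrib eval_nat_numeral)
  also have "\<dots> \<le> (2224 * (real m * p ^ 5 + W\<^sup>2)) * exp 22"
  proof (rule mult_mono)
    have W: "0 \<le> W" "W \<le> 1" using mp p0 unfolding W_def by auto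
    have "W ^ 3 \<le> W ^ 2" using W by (simp add: power_decreasing)
    moreover have "W ^ 2 * p \<le> W ^ 2" using p0 p1 by (simp add: mult_left_le)
    moreover have "0 \<le> real m * p ^ 5" "0 \<le> W ^ 2" using p0 by auto
    ultimately show "2016 * W ^ 3 + 112 * W ^ 2 * p + 96 * W ^ 2 + 2 * (real m * p ^ 5) \<le> 2224 * (real m * p ^ 5 + W\<^sup>2)"
      by (simp only: distrib_left mult.assoc)
    have "\<tau> ^ m \<le> exp (real m * (22 * p ^ 3))" unfolding \<tau>_def by (rule pow_exp) (use p0 in auto)
    also have "\<dots> \<le> exp 22" using mp by simp
    finally show "\<tau> ^ m \<le> exp 22" .
  qed (use p0 tau1 in auto)
  finally have M4f: "\<bar>M4 t2 t3 t4 m\<bar> \<le> 2224 * (real m * p ^ 5 + W\<^sup>2) * exp 22" .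
  have Be: "B ^ 4 \<le> exp (- 4 * real m * p\<^sup>2)"
  proof -
    have "B \<le> exp (real m * (- p\<^sup>2))" unfolding B_def b_def by (rule pow_exp) (use qb in auto)
    then have "B ^ 4 \<le> exp (real m * (- p\<^sup>2)) ^ 4" using bpos unfolding B_def by (intro power_mono) auto
    also have "\<dots> = exp (- 4 * real m * p\<^sup>2)" by (simp flip: exp_of_nat_mult add: algebra_simps)
    finally show ?thesis .
  qed
  have closed: "a4 ^ m - 4 * B * a3 ^ m + 6 * B ^ 2 * a2 ^ m - 3 * B ^ 4 = B ^ 4 * M4 t2 t3 t4 m"
  proof -
    have Bp: "B \<noteq> 0" unfolding B_def using bpos by simp
    have "t2 ^ m = a2 ^ m / B ^ 2" "t3 ^ m = a3 ^ m / B ^ 3" "t4 ^ m = a4 ^ m / B ^ 4"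
      unfolding t2_def t3_def t4_def B_def by (simp_all add: power_divide powpowE)
    then have h: "B ^ 4 * t4 ^ m = a4 ^ m" "B ^ 4 * t3 ^ m = B * a3 ^ m" "B ^ 4 * t2 ^ m = B ^ 2 * a2 ^ m"
      using Bp by (simp_all add: field_simps eval_nat_numeral)
    have "B ^ 4 * M4 t2 t3 t4 m = B ^ 4 * t4 ^ m - 4 * (B ^ 4 * t3 ^ m) + 6 * (B ^ 4 * t2 ^ m) - 3 * B ^ 4"
      unfolding M4_def by (simp add: algebra_simps)
    then show ?thesis unfolding h by simp
  qed
  have "a4 ^ m - 4 * B * a3 ^ m + 6 * B ^ 2 * a2 ^ m - 3 * B ^ 4 \<le> B ^ 4 * \<bar>M4 t2 t3 t4 m\<bar>"
    unfolding closed using bpos unfolding B_def by (intro mult_left_mono) auto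
  also have "\<dots> \<le> exp (- 4 * real m * p\<^sup>2) * (2224 * (real m * p ^ 5 + W\<^sup>2) * exp 22)"
    using Be M4f bpos unfolding B_def by (intro mult_mono) auto
  finally show ?thesis unfolding a2_def a3_def a4_def B_def b_def q_def W_def by (simp add: algebra_simps)
qed

end



theorem lemma6p1:
  "\<exists>(m0::nat) (C::real). C > 0 \<and>
     (\<forall>(m::nat) (p::real). m > m0 \<longrightarrow> 0 < p \<longrightarrow> p < 1 \<longrightarrow> real m * p ^ 3 \<le> 1 \<longrightarrow>
        normsq m p 1 (contr m p 1 1 0 1 (gbar1 m p) (gbar1 m p))
          \<le> C * (real m * p ^ 5 * exp (- 4 * real m * p\<^sup>2) + (real m * p ^ 3)\<^sup>2 * exp (- 4 * real m * p\<^sup>2))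
      \<and> normsq m p 2 (contr m p 2 2 1 1 (gbar2 m p) (gbar2 m p))
          \<le> C * (real m * p ^ 4 * exp (- 4 * real m * p\<^sup>2) + (real m * p ^ 3)\<^sup>2 * exp (- 4 * real m * p\<^sup>2))
      \<and> normsq m p 1 (contr m p 2 1 1 1 (gbar2 m p) (gbar1 m p))
          \<le> C * (real m * p ^ 5 * exp (- 4 * real m * p\<^sup>2) + (real m * p ^ 3)\<^sup>2 * exp (- 4 * real m * p\<^sup>2)))"
proof (intro exI conjI allI impI)
  define C :: real where "C = 2224 * exp 22"
  show "C > 0" unfolding C_def by simp
  have e4: "exp (4::real) \<le> exp 22" by simp
  have e0: "0 \<le> exp (4::real)" by simp
  have C24: "24 * exp 4 \<le> C" unfolding C_def using e4 e0 by linarith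
  have C8: "8 * exp 4 \<le> C" unfolding C_def using e4 e0 by linarith
  fix m :: nat and p :: real
  assume m: "1000 < m" and p0: "0 < p" and p1: "p < 1" and mp: "real m * p ^ 3 \<le> 1"
  define E where "E = exp (- 4 * real m * p\<^sup>2)"
  have Epos: "0 \<le> E" unfolding E_def by simp
  have p10: "p \<le> 1/10"
  proof (rule ccontr)
    assume "\<not> p \<le> 1/10"
    then have "(1/10) ^ 3 < p ^ 3" by (intro power_strict_mono) auto
    moreover have "1000 < real m" using m by simp
    ultimately have "1000 * (1/10) ^ 3 < real m * p ^ 3"
      by (intro mult_strict_mono) auto
    moreover have "1000 * (1/10::real) ^ 3 = 1" by (simp add: eval_nat_numeral)
    ultimately show False using mp by linarith
  qed
  have m2: "2 \<le> m" using m by simp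
  have n1: "0 \<le> real m * p ^ 5 + (real m * p ^ 3)\<^sup>2" and n2: "0 \<le> real m * p ^ 4 + (real m * p ^ 3)\<^sup>2"
    using p0 by auto
  show "normsq m p 1 (contr m p 1 1 0 1 (gbar1 m p) (gbar1 m p))
          \<le> C * (real m * p ^ 5 * exp (- 4 * real m * p\<^sup>2) + (real m * p ^ 3)\<^sup>2 * exp (- 4 * real m * p\<^sup>2))"
    unfolding case1_closed using case1_num[OF p0 p10 mp] by (simp add: C_def algebra_simps)
  show "normsq m p 2 (contr m p 2 2 1 1 (gbar2 m p) (gbar2 m p))
          \<le> C * (real m * p ^ 4 * exp (- 4 * real m * p\<^sup>2) + (real m * p ^ 3)\<^sup>2 * exp (- 4 * real m * p\<^sup>2))"
  proof -
    have "normsq m p 2 (contr m p 2 2 1 1 (gbar2 m p) (gbar2 m p))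
        \<le> 24 * exp 4 * (real m * p ^ 4 + (real m * p ^ 3)\<^sup>2) * E"
      using case2_bound[of p m] case2_num[OF p0 p10 m2 mp] p0 p1 unfolding E_def by linarith
    also have "\<dots> \<le> C * (real m * p ^ 4 + (real m * p ^ 3)\<^sup>2) * E"
      using C24 n2 Epos by (intro mult_right_mono) auto
    finally show ?thesis unfolding E_def by (simp add: algebra_simps)
  qed
  show "normsq m p 1 (contr m p 2 1 1 1 (gbar2 m p) (gbar1 m p))
          \<le> C * (real m * p ^ 5 * exp (- 4 * real m * p\<^sup>2) + (real m * p ^ 3)\<^sup>2 * exp (- 4 * real m * p\<^sup>2))"
  proof -
    have "normsq m p 1 (contr m p 2 1 1 1 (gbar2 m p) (gbar1 m p))
        \<le> 8 * exp 4 * (real m * p ^ 5 + (real m * p ^ 3)\<^sup>2) * E"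
      unfolding case3_closed E_def using case3_num[OF p0 p10 m2 mp] by simp
    also have "\<dots> \<le> C * (real m * p ^ 5 + (real m * p ^ 3)\<^sup>2) * E"
      using C8 n1 Epos by (intro mult_right_mono) auto
    finally show ?thesis unfolding E_def by (simp add: algebra_simps)
  qed
qed

end
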